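(* Let $M=A+\Delta-\sigma vv^{\mathsf T}$ be a generalized modularity matrix, and let $x\neq 0$ satisfy $Mx=m_Gx$, with $x$ oriented so that $v^{\mathsf T}x\ge 0$. Then the set $S=\{i\in V: x_i\ge 0\}$ induces a connected subgraph $G(S)$ of $G$.
   Context: Let $V=\{1,\dots,n\}$ and let $A\in\mathbb{R}^{n\times n}$ be the adjacency matrix of an undirected connected weighted graph $G$ on $V$, possibly with loops, i.e. $A=(a_{ij})$ is symmetric, entrywise nonnegative and irreducible. A generalized modularity matrix is any matrix $M=A+\Delta-\sigma vv^{\mathsf T}$ where $\Delta$ is a real diagonal $n\times n$ matrix, $v\in\mathbb{R}^n$ is a nonzero entrywise nonnegative vector, and $\sigma>0$. Eigenvalues of a real symmetric matrix $X$ are ordered $\lambda_1(X)\ge\cdots\ge\lambda_n(X)$; $m_G:=\lambda_1(M)$. For $S\subseteq V$, $G(S)$ denotes the subgraph induced by $S$, whose adjacency matrix is the principal submatrix $A(S)$ of $A$ with indices in $S$; it is connected if the graph on vertex set $S$ in which distinct $i,j$ are adjacent iff $a_{ij}>0$ is connected. *)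

theory Defs
  imports "HOL-Analysis.Analysis"
begin

text \<open>Vertex set V is the finite type 'n; matrices are real^'n^'n.\<close>

definition symmetric_mat :: "real^'n^'n \<Rightarrow> bool" where
  "symmetric_mat X \<longleftrightarrow> transpose X = X"

definition nonneg_mat :: "real^'n^'n \<Rightarrow> bool" where
  "nonneg_mat X \<longleftrightarrow> (\<forall>i j. X $ i $ j \<ge> 0)"

definition nonneg_vec :: "real^'n \<Rightarrow> bool" where
  "nonneg_vec v \<longleftrightarrow> (\<forall>i. v $ i \<ge> 0)"

definition diagonal_mat :: "real^'n^'n \<Rightarrow> bool" where
  "diagonal_mat D \<longleftrightarrow> (\<forall>i j. i \<noteq> j \<longrightarrow> D $ i $ j = 0)"

definition irreducible_mat :: "real^'n^'n \<Rightarrow> bool" where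
  "irreducible_mat X \<longleftrightarrow> (\<forall>i j. (i, j) \<in> {(a, b). X $ a $ b \<noteq> 0}\<^sup>*)"

definition outer :: "real^'n \<Rightarrow> real^'n \<Rightarrow> real^'n^'n" where
  "outer u w = (\<chi> i j. u $ i * w $ j)"

definition lambda_max :: "real^'n^'n \<Rightarrow> real" where
  "lambda_max X = Max {l. \<exists>x. x \<noteq> 0 \<and> X *v x = l *\<^sub>R x}"

definition induced_connected :: "real^'n^'n \<Rightarrow> 'n set \<Rightarrow> bool" where
  "induced_connected A S \<longleftrightarrow>
     (\<forall>i\<in>S. \<forall>j\<in>S. (i, j) \<in> {(a, b). a \<in> S \<and> b \<in> S \<and> a \<noteq> b \<and> A $ a $ b > 0}\<^sup>*)"

end

theory Submission imports Defs begin

lemma inner_mat_sum: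
  fixes X :: "real^'n^'n"
  shows "u \<bullet> (X *v w) = (\<Sum>i\<in>UNIV. \<Sum>j\<in>UNIV. u$i * X$i$j * w$j)"
  by (simp add: inner_vec_def matrix_vector_mult_def sum_distrib_left mult.assoc)

lemma sym_inner:
  fixes M :: "real^'n^'n"
  assumes sym: "\<forall>i j. M$i$j = M$j$i"
  shows "u \<bullet> (M *v w) = w \<bullet> (M *v u)"
proof -
  have "u \<bullet> (M *v w) = (\<Sum>i\<in>UNIV. \<Sum>j\<in>UNIV. u$i * M$i$j * w$j)" by (rule inner_mat_sum)
  also have "\<dots> = (\<Sum>j\<in>UNIV. \<Sum>i\<in>UNIV. u$i * M$i$j * w$j)" by (rule sum.swap)
  also have "\<dots> = (\<Sum>j\<in>UNIV. \<Sum>i\<in>UNIV. w$j * M$j$i * u$i)"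
    using sym by (simp add: mult.commute mult.left_commute)
  also have "\<dots> = w \<bullet> (M *v u)" by (rule inner_mat_sum[symmetric])
  finally show ?thesis .
qed

lemma quad_expand:
  fixes M :: "real^'n^'n"
  assumes sym: "\<forall>i j. M$i$j = M$j$i"
  shows "(z + t *\<^sub>R y) \<bullet> (M *v (z + t *\<^sub>R y)) = z \<bullet> (M *v z) + 2*t*(y \<bullet> (M *v z)) + t^2 * (y \<bullet> (M *v y))"
  using sym_inner[OF sym, of z y]
  by (simp add: matrix_vector_right_distrib matrix_vector_mult_scaleR inner_add_left inner_add_right power2_eq_square algebra_simps)

lemma quad_aux:
  fixes a b :: real
  assumes "\<forall>t. 2*t*a + t^2*b \<le> 0"
  shows "a = 0"
proof (rule ccontr)
  assume "a \<noteq> 0"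
  define k where "k = \<bar>b\<bar> + 1"
  have pos: "k > 0" by (simp add: k_def)
  define t where "t = a / k"
  have "2*t*a + t^2*b \<le> 0" using assms by blast
  moreover have "2*t*a + t^2*b = (2*a*a*k + a^2*b)/k^2" using pos
    by (simp add: t_def power2_eq_square field_simps)
  ultimately have "2*a*a*k + a^2*b \<le> 0" using pos by (simp add: divide_le_0_iff)
  hence h1: "2*(a*a)*\<bar>b\<bar> + 2*(a*a) + (a*a)*b \<le> 0" by (simp add: k_def power2_eq_square algebra_simps)
  have "-\<bar>b\<bar> \<le> b" by simp
  from mult_left_mono[OF this, of "a*a"] have h2: "(a*a)*b \<ge> - ((a*a) * \<bar>b\<bar>)" by simp
  have h3: "a*a > 0" using \<open>a \<noteq> 0\<close> by (cases "a > 0") (auto simp: mult_neg_neg)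
  have h4: "(a*a)*\<bar>b\<bar> \<ge> 0" by simp
  show False using h1 h2 h3 h4 by linarith
qed

lemma max_imp_eig:
  fixes M :: "real^'n^'n"
  assumes sym: "\<forall>i j. M$i$j = M$j$i"
    and le: "\<forall>y. y \<bullet> (M *v y) \<le> c * (y \<bullet> y)"
    and eq: "z \<bullet> (M *v z) = c * (z \<bullet> z)"
  shows "M *v z = c *\<^sub>R z"
proof -
  have key: "y \<bullet> (M *v z - c *\<^sub>R z) = 0" for y
  proof -
    have "\<forall>t. 2*t*(y \<bullet> (M *v z - c *\<^sub>R z)) + t^2*(y \<bullet> (M *v y) - c * (y \<bullet> y)) \<le> 0"
    proof
      fix t
      have "(z + t *\<^sub>R y) \<bullet> (M *v (z + t *\<^sub>R y)) \<le> c * ((z + t *\<^sub>R y) \<bullet> (z + t *\<^sub>R y))" using le by blast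
      thus "2*t*(y \<bullet> (M *v z - c *\<^sub>R z)) + t^2*(y \<bullet> (M *v y) - c * (y \<bullet> y)) \<le> 0"
        unfolding quad_expand[OF sym] using eq
        by (simp add: inner_add_left inner_add_right inner_diff_right power2_eq_square algebra_simps inner_commute)
    qed
    thus ?thesis by (rule quad_aux)
  qed
  have "(M *v z - c *\<^sub>R z) \<bullet> (M *v z - c *\<^sub>R z) = 0" by (rule key)
  thus ?thesis by simp
qed

lemma eig_finite:
  fixes M :: "real^'n^'n"
  assumes sym: "\<forall>i j. M$i$j = M$j$i"
  shows "finite {l. \<exists>x. x \<noteq> 0 \<and> M *v x = l *\<^sub>R x}" (is "finite ?E")
proof -
  define ev where "ev l = (SOME x. x \<noteq> 0 \<and> M *v x = l *\<^sub>R x)" for l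
  have ev: "ev l \<noteq> 0 \<and> M *v ev l = l *\<^sub>R ev l" if "l \<in> ?E" for l
    using someI_ex[of "\<lambda>x. x \<noteq> 0 \<and> M *v x = l *\<^sub>R x"] that unfolding ev_def by auto
  have inj: "inj_on ev ?E"
  proof (rule inj_onI)
    fix a b assume a: "a \<in> ?E" and b: "b \<in> ?E" and e: "ev a = ev b"
    have "a *\<^sub>R ev a = b *\<^sub>R ev a" using ev[OF a] ev[OF b] e by metis
    thus "a = b" using ev[OF a] by (simp add: scaleR_cancel_right)
  qed
  have "pairwise orthogonal (ev ` ?E)"
  proof (rule pairwiseI)
    fix p q assume p: "p \<in> ev ` ?E" and q: "q \<in> ev ` ?E" and pq: "p \<noteq> q"
    then obtain a b where a: "a \<in> ?E" "p = ev a" and b: "b \<in> ?E" "q = ev b" by blast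
    have ab: "a \<noteq> b" using pq a b by blast
    have "a * (p \<bullet> q) = (M *v p) \<bullet> q" using ev[OF a(1)] a(2) by simp
    also have "\<dots> = q \<bullet> (M *v p)" by (simp add: inner_commute)
    also have "\<dots> = p \<bullet> (M *v q)" by (rule sym_inner[OF sym])
    also have "\<dots> = b * (p \<bullet> q)" using ev[OF b(1)] b(2) by simp
    finally have "(a - b) * (p \<bullet> q) = 0" by (simp add: algebra_simps)
    thus "orthogonal p q" using ab by (simp add: orthogonal_def)
  qed
  hence "finite (ev ` ?E)" by (rule pairwise_orthogonal_imp_finite)
  thus ?thesis using inj finite_imageD by blast
qed

lemma rayleigh:
  fixes M :: "real^'n^'n"
  assumes sym: "\<forall>i j. M$i$j = M$j$i"
  shows "\<forall>y. y \<bullet> (M *v y) \<le> lambda_max M * (y \<bullet> y)"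
proof -
  let ?f = "\<lambda>y. y \<bullet> (M *v y)"
  have ne: "sphere (0::real^'n) 1 \<noteq> {}"
  proof -
    obtain u :: "real^'n" where "u \<noteq> 0" using axis_eq_0_iff[of "undefined::'n" "1::real"] by auto
    hence "(1/norm u) *\<^sub>R u \<in> sphere 0 1" by simp
    thus ?thesis by blast
  qed
  have "continuous_on (sphere 0 1) ?f" by (intro continuous_intros)
  then obtain z0 where z0: "z0 \<in> sphere 0 1" and mx: "\<forall>y\<in>sphere 0 1. ?f y \<le> ?f z0"
    using continuous_attains_sup[OF compact_sphere ne] by blast
  define \<mu> where "\<mu> = ?f z0"
  have le: "\<forall>y. ?f y \<le> \<mu> * (y \<bullet> y)"
  proof
    fix y :: "real^'n"
    show "?f y \<le> \<mu> * (y \<bullet> y)"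
    proof (cases "y = 0")
      case True thus ?thesis by simp
    next
      case False
      define u where "u = (1/norm y) *\<^sub>R y"
      have "u \<in> sphere 0 1" using False by (simp add: u_def)
      hence "?f u \<le> \<mu>" using mx \<mu>_def by blast
      moreover have "y = norm y *\<^sub>R u" using False by (simp add: u_def)
      hence "?f y = (norm y)^2 * ?f u"
        by (metis (no_types, lifting) inner_scaleR_left inner_scaleR_right matrix_vector_mult_scaleR mult.assoc power2_eq_square)
      moreover have "y \<bullet> y = (norm y)^2" by (simp add: power2_norm_eq_inner)
      ultimately show ?thesis by (metis mult.commute mult_right_mono zero_le_power2)
    qed
  qed
  have "z0 \<bullet> z0 = 1" using z0 by (simp add: power2_norm_eq_inner[symmetric])
  hence "?f z0 = \<mu> * (z0 \<bullet> z0)" by (simp add: \<mu>_def)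
  hence "M *v z0 = \<mu> *\<^sub>R z0" using max_imp_eig[OF sym le] by blast
  moreover have "z0 \<noteq> 0" using z0 by auto
  ultimately have "\<mu> \<in> {l. \<exists>x. x \<noteq> 0 \<and> M *v x = l *\<^sub>R x}" by blast
  hence "\<mu> \<le> lambda_max M" unfolding lambda_max_def using eig_finite[OF sym] by simp
  thus ?thesis using le by (meson dual_order.trans inner_ge_zero mult_right_mono)
qed


lemma Mvec:
  fixes A \<Delta> :: "real^'n^'n" and v w :: "real^'n"
  shows "(A + \<Delta> - \<sigma> *\<^sub>R outer v v) *v w = A *v w + \<Delta> *v w - (\<sigma> * (v \<bullet> w)) *\<^sub>R v"
  by (simp add: vec_eq_iff matrix_vector_mult_def outer_def inner_vec_def algebra_simps
      sum.distrib sum_subtractf sum_distrib_left)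

lemma diag_row:
  fixes \<Delta> :: "real^'n^'n"
  assumes "diagonal_mat \<Delta>"
  shows "(\<Delta> *v w)$i = \<Delta>$i$i * w$i"
proof -
  have "(\<Delta> *v w)$i = (\<Sum>j\<in>UNIV. if j = i then \<Delta>$i$i * w$i else 0)"
    unfolding matrix_vector_mult_def vec_lambda_beta
    by (rule sum.cong) (use assms in \<open>auto simp: diagonal_mat_def\<close>)
  thus ?thesis by simp
qed

lemma inner_mat_zero:
  fixes X :: "real^'n^'n"
  assumes "\<forall>i j. u$i * X$i$j * w$j = 0"
  shows "u \<bullet> (X *v w) = 0"
  unfolding inner_mat_sum by (intro sum.neutral ballI) (use assms in blast)

lemma inner_mat_nonpos:
  fixes X :: "real^'n^'n"
  assumes "\<forall>i j. u$i * X$i$j * w$j \<le> 0"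
  shows "u \<bullet> (X *v w) \<le> 0"
  unfolding inner_mat_sum using assms by (simp add: sum_nonpos)

lemma rtrancl_exit:
  assumes "(a, b) \<in> E\<^sup>*" "a \<in> P" "b \<notin> P"
  shows "\<exists>c d. (c, d) \<in> E \<and> c \<in> P \<and> d \<notin> P"
  using assms
proof (induction rule: rtrancl_induct)
  case base thus ?case by simp
next
  case (step y z)
  show ?case
  proof (cases "y \<in> P")
    case True thus ?thesis using step by blast
  next
    case False thus ?thesis using step by blast
  qed
qed

lemma core:
  fixes A \<Delta> :: "real^'n^'n" and x z :: "real^'n"
  assumes nn: "nonneg_mat A" and cP: "c \<in> P" and dx: "x$d < 0" and Acd: "A$c$d > 0"
    and out: "\<forall>j. j \<notin> P \<and> x$j \<ge> 0 \<longrightarrow> A$c$j = 0"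
    and zP: "\<forall>j\<in>P. z$j = \<gamma> * x$j" and zT: "\<forall>j. x$j < 0 \<longrightarrow> z$j = 0"
    and Pn: "\<forall>j\<in>P. x$j \<ge> 0"
    and rowx: "m * x$c = (A *v x)$c + \<Delta>$c$c * x$c - r"
    and rowz: "m * z$c = (A *v z)$c + \<Delta>$c$c * z$c"
    and r: "r \<ge> 0" and g: "\<gamma> \<noteq> 0"
  shows False
proof -
  define x3 where "x3 = (\<chi> j. if x$j < 0 then x$j else (0::real))"
  define t where "t = (\<Sum>j\<in>UNIV. A$c$j * x3$j)"
  have "(A *v z)$c = (\<Sum>j\<in>UNIV. \<gamma> * (A$c$j * x$j) - \<gamma> * (A$c$j * x3$j))"
    unfolding matrix_vector_mult_def
  proof (simp, rule sum.cong)
    fix j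
    show "A$c$j * z$j = \<gamma> * (A$c$j * x$j) - \<gamma> * (A$c$j * x3$j)"
    proof (cases "x$j < 0")
      case True
      hence "j \<notin> P" using Pn by force
      thus ?thesis using True zT by (simp add: x3_def)
    next
      case False
      thus ?thesis using zP out by (cases "j \<in> P") (auto simp: x3_def)
    qed
  qed simp
  hence Az: "(A *v z)$c = \<gamma> * (A *v x)$c - \<gamma> * t"
    by (simp add: t_def matrix_vector_mult_def sum_subtractf sum_distrib_left)
  have tn: "\<forall>j. A$c$j * x3$j \<le> 0"
    using nn unfolding nonneg_mat_def x3_def by (auto simp: mult_nonneg_nonpos)
  have "t = A$c$d * x3$d + (\<Sum>j\<in>UNIV-{d}. A$c$j * x3$j)"
    unfolding t_def by (simp add: sum.remove)
  moreover have "(\<Sum>j\<in>UNIV-{d}. A$c$j * x3$j) \<le> 0" using tn by (simp add: sum_nonpos)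
  moreover have "A$c$d * x3$d < 0" using dx Acd by (simp add: x3_def mult_pos_neg)
  ultimately have tneg: "t < 0" by linarith
  have zc: "z$c = \<gamma> * x$c" using zP cP by blast
  have "\<gamma> * (m * x$c) = \<gamma> * (A *v x)$c - \<gamma> * t + \<Delta>$c$c * (\<gamma> * x$c)"
    using rowz Az zc by (simp add: algebra_simps)
  moreover have "\<gamma> * (m * x$c) = \<gamma> * (A *v x)$c + \<Delta>$c$c * (\<gamma> * x$c) - \<gamma> * r"
  proof -
    from rowx have "\<gamma> * (m * x$c) = \<gamma> * ((A *v x)$c + \<Delta>$c$c * x$c - r)" by simp
    thus ?thesis by (simp add: algebra_simps)
  qed
  ultimately have "\<gamma> * t = \<gamma> * r" by linarith
  hence "t = r" using g by simp
  thus False using tneg r by linarith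
qed


theorem lemma3p3:
  fixes A \<Delta> :: "real^'n^'n" and v x :: "real^'n" and \<sigma> :: real
  assumes "symmetric_mat A" and "nonneg_mat A" and "irreducible_mat A"
    and "diagonal_mat \<Delta>"
    and "v \<noteq> 0" and "nonneg_vec v" and "\<sigma> > 0"
    and "x \<noteq> 0"
    and "(A + \<Delta> - \<sigma> *\<^sub>R outer v v) *v x = lambda_max (A + \<Delta> - \<sigma> *\<^sub>R outer v v) *\<^sub>R x"
    and "v \<bullet> x \<ge> 0"
  shows "induced_connected A {i. x $ i \<ge> 0}"
proof (rule ccontr)
  define M where "M = A + \<Delta> - \<sigma> *\<^sub>R outer v v"
  define m where "m = lambda_max M"
  have eig: "M *v x = m *\<^sub>R x" using assms(9) by (simp add: M_def m_def)
  have symA: "A$i$j = A$j$i" for i j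
  proof -
    have "(transpose A)$i$j = A$j$i" by (simp add: transpose_def)
    thus ?thesis using assms(1) unfolding symmetric_mat_def by simp
  qed
  have symM: "\<forall>i j. M$i$j = M$j$i"
  proof (intro allI)
    fix i j
    show "M$i$j = M$j$i"
    proof (cases "i = j")
      case False
      thus ?thesis using symA[of i j] assms(4) unfolding M_def diagonal_mat_def outer_def
        by (simp add: mult.commute)
    qed simp
  qed
  have ray: "\<forall>y. y \<bullet> (M *v y) \<le> m * (y \<bullet> y)" using rayleigh[OF symM] m_def by simp
  have Minner: "u \<bullet> (M *v w) = u \<bullet> (A *v w) + u \<bullet> (\<Delta> *v w) - \<sigma> * (v \<bullet> u) * (v \<bullet> w)" for u w
    unfolding M_def Mvec by (simp add: inner_diff_right inner_add_right inner_commute)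
  have Mrow: "(M *v w)$i = (A *v w)$i + \<Delta>$i$i * w$i - \<sigma> * v$i * (v \<bullet> w)" for w i
    unfolding M_def Mvec using diag_row[OF assms(4)] by simp
  have vnn: "v$i \<ge> 0" for i using assms(6) unfolding nonneg_vec_def by blast
  have Ann: "A$i$j \<ge> 0" for i j using assms(2) unfolding nonneg_mat_def by blast
  define S where "S = {i. x$i \<ge> (0::real)}"
  define R where "R = {(a,b). a \<in> S \<and> b \<in> S \<and> a \<noteq> b \<and> A$a$b > 0}"
  assume "\<not> induced_connected A {i. x$i \<ge> 0}"
  then obtain i0 j0 where i0: "i0 \<in> S" and j0: "j0 \<in> S" and nr: "(i0,j0) \<notin> R\<^sup>*"
    unfolding induced_connected_def S_def R_def by blast
  define S1 where "S1 = {j\<in>S. (i0,j) \<in> R\<^sup>*}"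
  define S2 where "S2 = {j\<in>S. (i0,j) \<notin> R\<^sup>*}"
  have noedge: "A$i$j = 0" if "i \<in> S1" "j \<in> S2" for i j
  proof (rule ccontr)
    assume "A$i$j \<noteq> 0"
    hence "A$i$j > 0" using Ann[of i j] by linarith
    moreover have "i \<noteq> j" using that S1_def S2_def by auto
    ultimately have "(i,j) \<in> R" using that unfolding R_def S1_def S2_def by auto
    moreover have "(i0,i) \<in> R\<^sup>*" using that S1_def by auto
    ultimately have "(i0,j) \<in> R\<^sup>*" by (meson rtrancl.rtrancl_into_rtrancl)
    thus False using that S2_def by auto
  qed
  define E where "E = {(a,b). A$a$b \<noteq> (0::real)}"
  have irr: "(a,b) \<in> E\<^sup>*" for a b using assms(3) unfolding irreducible_mat_def E_def by blast
  have i0S1: "i0 \<in> S1" using i0 by (simp add: S1_def)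
  have j0S2: "j0 \<in> S2" using j0 nr by (simp add: S2_def)
  have S12: "S1 \<inter> S2 = {}" "S1 \<union> S2 = S" by (auto simp: S1_def S2_def)
  obtain c1 d1 where cd1: "(c1,d1) \<in> E" "c1 \<in> S1" "d1 \<notin> S1"
    using rtrancl_exit[OF irr[of i0 j0] i0S1] j0S2 S12 by blast
  have A1: "A$c1$d1 > 0" using cd1(1) Ann[of c1 d1] E_def by auto
  have "d1 \<notin> S2" using noedge[OF cd1(2)] A1 by auto
  hence x1d: "x$d1 < 0" using cd1(3) S12 S_def by auto
  obtain c2 d2 where cd2: "(c2,d2) \<in> E" "c2 \<in> S2" "d2 \<notin> S2"
    using rtrancl_exit[OF irr[of j0 i0] j0S2] i0S1 S12 by blast
  have A2: "A$c2$d2 > 0" using cd2(1) Ann[of c2 d2] E_def by auto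
  have "d2 \<notin> S1" using noedge[OF _ cd2(2)] symA[of c2 d2] A2 by auto
  hence x2d: "x$d2 < 0" using cd2(3) S12 S_def by auto
  define x1 where "x1 = (\<chi> j. if j \<in> S1 then x$j else 0)"
  define x2 where "x2 = (\<chi> j. if j \<in> S2 then x$j else 0)"
  define x3 where "x3 = (\<chi> j. if x$j < 0 then x$j else 0)"
  have xdec: "x = x1 + x2 + x3"
    by (auto simp: vec_eq_iff x1_def x2_def x3_def S_def S1_def S2_def)
  define w1 where "w1 = v \<bullet> x1"
  define w2 where "w2 = v \<bullet> x2"
  define w3 where "w3 = v \<bullet> x3"
  define s where "s = v \<bullet> x"
  have s: "s = w1 + w2 + w3" unfolding s_def w1_def w2_def w3_def
    by (subst xdec) (simp add: inner_add_right)
  have sge: "s \<ge> 0" using assms(10) s_def by simp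
  have x1n: "x1$j \<ge> 0" for j using S12 by (auto simp: x1_def S_def S1_def)
  have x2n: "x2$j \<ge> 0" for j using S12 by (auto simp: x2_def S_def S2_def)
  have x3n: "x3$j \<le> 0" for j by (auto simp: x3_def)
  have w1n: "w1 \<ge> 0" unfolding w1_def inner_vec_def using vnn x1n by (simp add: sum_nonneg)
  have w2n: "w2 \<ge> 0" unfolding w2_def inner_vec_def using vnn x2n by (simp add: sum_nonneg)
  have o12: "x1 \<bullet> x2 = 0" unfolding inner_vec_def x1_def x2_def using S12
    by (intro sum.neutral ballI) auto
  have o13: "x1 \<bullet> x3 = 0" unfolding inner_vec_def x1_def x3_def using S12
    by (intro sum.neutral ballI) (auto simp: S_def S1_def S2_def)
  have o23: "x2 \<bullet> x3 = 0" unfolding inner_vec_def x2_def x3_def using S12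
    by (intro sum.neutral ballI) (auto simp: S_def S1_def S2_def)
  have A12: "x1 \<bullet> (A *v x2) = 0"
    by (rule inner_mat_zero) (auto simp: x1_def x2_def noedge)
  have D12: "x1 \<bullet> (\<Delta> *v x2) = 0"
  proof (rule inner_mat_zero, intro allI)
    fix i j
    show "x1$i * \<Delta>$i$j * x2$j = 0"
    proof (cases "i = j")
      case True thus ?thesis by (auto simp: x1_def x2_def x3_def S1_def S2_def)
    next
      case False thus ?thesis using assms(4) by (simp add: diagonal_mat_def)
    qed
  qed
  have D13: "x1 \<bullet> (\<Delta> *v x3) = 0"
  proof (rule inner_mat_zero, intro allI)
    fix i j
    show "x1$i * \<Delta>$i$j * x3$j = 0"
    proof (cases "i = j")
      case True thus ?thesis by (auto simp: x1_def x2_def x3_def S1_def S2_def S_def)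
    next
      case False thus ?thesis using assms(4) by (simp add: diagonal_mat_def)
    qed
  qed
  have D23: "x2 \<bullet> (\<Delta> *v x3) = 0"
  proof (rule inner_mat_zero, intro allI)
    fix i j
    show "x2$i * \<Delta>$i$j * x3$j = 0"
    proof (cases "i = j")
      case True thus ?thesis by (auto simp: x1_def x2_def x3_def S1_def S2_def S_def)
    next
      case False thus ?thesis using assms(4) by (simp add: diagonal_mat_def)
    qed
  qed
  define c1' where "c1' = x1 \<bullet> (A *v x3)"
  define c2' where "c2' = x2 \<bullet> (A *v x3)"
  have c1n: "c1' \<le> 0" unfolding c1'_def
    by (rule inner_mat_nonpos) (meson Ann mult_nonneg_nonneg mult_nonneg_nonpos x1n x3n)
  have c2n: "c2' \<le> 0" unfolding c2'_def
    by (rule inner_mat_nonpos) (meson Ann mult_nonneg_nonneg mult_nonneg_nonpos x2n x3n)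
  have M12: "x1 \<bullet> (M *v x2) = - \<sigma> * w1 * w2" using Minner A12 D12 w1_def w2_def by simp
  have M21: "x2 \<bullet> (M *v x1) = - \<sigma> * w1 * w2" using M12 sym_inner[OF symM] by metis
  have M13: "x1 \<bullet> (M *v x3) = c1' - \<sigma> * w1 * w3" using Minner D13 w1_def w3_def c1'_def by simp
  have M23: "x2 \<bullet> (M *v x3) = c2' - \<sigma> * w2 * w3" using Minner D23 w2_def w3_def c2'_def by simp
  have Mx: "M *v x = M *v x1 + M *v x2 + M *v x3" by (subst xdec) (simp add: matrix_vector_right_distrib)
  have E1: "x1 \<bullet> (M *v x1) + x1 \<bullet> (M *v x2) + x1 \<bullet> (M *v x3) = m * (x1 \<bullet> x1)"
  proof -
    have "x1 \<bullet> (M *v x) = m * (x1 \<bullet> x)" using eig by simp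
    also have "x1 \<bullet> x = x1 \<bullet> x1" by (subst xdec) (simp add: inner_add_right o12 o13)
    finally show ?thesis using Mx by (simp add: inner_add_right)
  qed
  have E2: "x2 \<bullet> (M *v x1) + x2 \<bullet> (M *v x2) + x2 \<bullet> (M *v x3) = m * (x2 \<bullet> x2)"
  proof -
    have "x2 \<bullet> (M *v x) = m * (x2 \<bullet> x)" using eig by simp
    also have "x2 \<bullet> x = x2 \<bullet> x2" by (subst xdec) (simp add: inner_add_right o12 o23 inner_commute)
    finally show ?thesis using Mx by (simp add: inner_add_right)
  qed
  have gen: "m * ((\<alpha> *\<^sub>R x1 - \<beta> *\<^sub>R x2) \<bullet> (\<alpha> *\<^sub>R x1 - \<beta> *\<^sub>R x2))
      - (\<alpha> *\<^sub>R x1 - \<beta> *\<^sub>R x2) \<bullet> (M *v (\<alpha> *\<^sub>R x1 - \<beta> *\<^sub>R x2))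
      = \<alpha>^2 * (c1' - \<sigma>*w1*w2 - \<sigma>*w1*w3) + \<beta>^2 * (c2' - \<sigma>*w1*w2 - \<sigma>*w2*w3) - 2*\<alpha>*\<beta>*\<sigma>*w1*w2"
    for \<alpha> \<beta>
  proof -
    have q: "(\<alpha> *\<^sub>R x1 - \<beta> *\<^sub>R x2) \<bullet> (M *v (\<alpha> *\<^sub>R x1 - \<beta> *\<^sub>R x2))
       = \<alpha>^2 * (x1 \<bullet> (M *v x1)) - \<alpha>*\<beta>*(x1 \<bullet> (M *v x2)) - \<alpha>*\<beta>*(x2 \<bullet> (M *v x1)) + \<beta>^2 * (x2 \<bullet> (M *v x2))"
      by (simp add: matrix_vector_mult_diff_distrib matrix_vector_mult_scaleR inner_diff_left
          inner_diff_right power2_eq_square algebra_simps)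
    have zz: "(\<alpha> *\<^sub>R x1 - \<beta> *\<^sub>R x2) \<bullet> (\<alpha> *\<^sub>R x1 - \<beta> *\<^sub>R x2) = \<alpha>^2 * (x1 \<bullet> x1) + \<beta>^2 * (x2 \<bullet> x2)"
      using o12 by (simp add: inner_diff_left inner_diff_right power2_eq_square inner_commute algebra_simps)
    have e1: "x1 \<bullet> (M *v x1) = m * (x1 \<bullet> x1) + \<sigma>*w1*w2 - c1' + \<sigma>*w1*w3" using E1 M12 M13 by linarith
    have e2: "x2 \<bullet> (M *v x2) = m * (x2 \<bullet> x2) + \<sigma>*w1*w2 - c2' + \<sigma>*w2*w3" using E2 M21 M23 by linarith
    show ?thesis unfolding q zz e1 e2 M12 M21
      by (simp add: power2_eq_square algebra_simps)
  qed
  obtain \<alpha> \<beta> where ab: "\<alpha> \<noteq> 0 \<or> \<beta> \<noteq> 0"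
    and geq: "m * ((\<alpha> *\<^sub>R x1 - \<beta> *\<^sub>R x2) \<bullet> (\<alpha> *\<^sub>R x1 - \<beta> *\<^sub>R x2))
      - (\<alpha> *\<^sub>R x1 - \<beta> *\<^sub>R x2) \<bullet> (M *v (\<alpha> *\<^sub>R x1 - \<beta> *\<^sub>R x2)) \<le> 0"
    and vz: "v \<bullet> (\<alpha> *\<^sub>R x1 - \<beta> *\<^sub>R x2) = 0"
  proof (cases "w1 = 0 \<and> w2 = 0")
    case True
    show ?thesis
    proof (rule that[of 1 0])
      show "m * ((1 *\<^sub>R x1 - 0 *\<^sub>R x2) \<bullet> (1 *\<^sub>R x1 - 0 *\<^sub>R x2))
        - (1 *\<^sub>R x1 - 0 *\<^sub>R x2) \<bullet> (M *v (1 *\<^sub>R x1 - 0 *\<^sub>R x2)) \<le> 0"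
        unfolding gen using True c1n by simp
      show "v \<bullet> (1 *\<^sub>R x1 - 0 *\<^sub>R x2) = 0" using True w1_def by simp
    qed simp
  next
    case False
    show ?thesis
    proof (rule that[of w2 w1])
      show "w2 \<noteq> 0 \<or> w1 \<noteq> 0" using False by blast
      have "w2^2 * (c1' - \<sigma>*w1*w2 - \<sigma>*w1*w3) + w1^2 * (c2' - \<sigma>*w1*w2 - \<sigma>*w2*w3) - 2*w2*w1*\<sigma>*w1*w2
          = w2^2 * c1' + w1^2 * c2' - \<sigma>*w1*w2*(w1+w2) * s"
        unfolding s by (simp add: power2_eq_square algebra_simps)
      moreover have "w2^2 * c1' \<le> 0" using c1n by (simp add: mult_nonneg_nonpos)
      moreover have "w1^2 * c2' \<le> 0" using c2n by (simp add: mult_nonneg_nonpos)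
      moreover have "\<sigma>*w1*w2*(w1+w2) * s \<ge> 0" using assms(7) w1n w2n sge by simp
      ultimately show "m * ((w2 *\<^sub>R x1 - w1 *\<^sub>R x2) \<bullet> (w2 *\<^sub>R x1 - w1 *\<^sub>R x2))
        - (w2 *\<^sub>R x1 - w1 *\<^sub>R x2) \<bullet> (M *v (w2 *\<^sub>R x1 - w1 *\<^sub>R x2)) \<le> 0"
        unfolding gen by fastforce
      show "v \<bullet> (w2 *\<^sub>R x1 - w1 *\<^sub>R x2) = 0" using w1_def w2_def by (simp add: inner_diff_right)
    qed
  qed
  define z where "z = \<alpha> *\<^sub>R x1 - \<beta> *\<^sub>R x2"
  have "z \<bullet> (M *v z) = m * (z \<bullet> z)" using geq ray unfolding z_def[symmetric]
    by (meson antisym diff_ge_0_iff_ge diff_le_0_iff_le)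
  hence Mz: "M *v z = m *\<^sub>R z" by (rule max_imp_eig[OF symM ray])
  have vz': "v \<bullet> z = 0" using vz z_def by simp
  have rowz: "m * z$c = (A *v z)$c + \<Delta>$c$c * z$c" for c
    using arg_cong[OF Mz, of "\<lambda>u. u$c"] Mrow[of z c] vz' by simp
  have rowx: "m * x$c = (A *v x)$c + \<Delta>$c$c * x$c - \<sigma> * v$c * s" for c
    using arg_cong[OF eig, of "\<lambda>u. u$c"] Mrow[of x c] s_def by simp
  have rn: "\<sigma> * v$c * s \<ge> 0" for c using assms(7) vnn sge by simp
  have zT: "\<forall>j. x$j < 0 \<longrightarrow> z$j = 0" using S12 by (auto simp: z_def x1_def x2_def S_def S1_def S2_def)
  show False
  proof (cases "\<alpha> = 0")
    case False
    show False
    proof (rule core[OF assms(2) cd1(2) x1d A1 _ _ zT _ rowx[of c1] rowz[of c1] rn False])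
      show "\<forall>j. j \<notin> S1 \<and> 0 \<le> x $ j \<longrightarrow> A $ c1 $ j = 0"
        using noedge[OF cd1(2)] by (auto simp: S_def S1_def S2_def)
      show "\<forall>j\<in>S1. z $ j = \<alpha> * x $ j" using S12 by (auto simp: z_def x1_def x2_def S1_def S2_def)
      show "\<forall>j\<in>S1. 0 \<le> x $ j" by (auto simp: S_def S1_def)
    qed
  next
    case True
    hence b: "- \<beta> \<noteq> 0" using ab by simp
    show False
    proof (rule core[OF assms(2) cd2(2) x2d A2 _ _ zT _ rowx[of c2] rowz[of c2] rn b])
      show "\<forall>j. j \<notin> S2 \<and> 0 \<le> x $ j \<longrightarrow> A $ c2 $ j = 0"
        using noedge[OF _ cd2(2)] symA by (auto simp: S_def S1_def S2_def)
      show "\<forall>j\<in>S2. z $ j = - \<beta> * x $ j" using S12 True by (auto simp: z_def x1_def x2_def S1_def S2_def)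
      show "\<forall>j\<in>S2. 0 \<le> x $ j" by (auto simp: S_def S2_def)
    qed
  qed
qed

end
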